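(* Let $d\in\mathbb{N}$. The set $\Pi\subset\mathbb{R}^d\times\mathbb{R}^d$ is Lebesgue measurable and has Lebesgue measure $0$. Moreover, for every $x\in\mathbb{R}^d$, the set $\Phi(x)\subset\mathbb{R}^d$ has Lebesgue measure $0$.
   Context: For $z\in\mathbb{R}^d$, $\|z\|$ denotes the sup-norm distance from $z$ to $\mathbb{Z}^d$. Write $\mathbb{N}=\{1,2,3,\dots\}$. For $\psi:\mathbb{N}\to\mathbb{R}_{\ge 0}$, let $W(\psi)$ be the set of pairs $(x,y)\in\mathbb{R}^d\times\mathbb{R}^d$ for which $\|nx+y\|<\psi(n)$ holds for infinitely many $n\in\mathbb{N}$. $\mathcal{D}$ is the set of all non-increasing $\psi:\mathbb{N}\to\mathbb{R}_{\ge0}$ with $\sum_n\psi(n)^d=\infty$. $\Pi=\bigcap_{\psi\in\mathcal{D}}W(\psi)$, and $\Phi(x)=\{y\in\mathbb{R}^d:(x,y)\in\Pi\}$. *)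

theory Defs
  imports "HOL-Analysis.Analysis"
begin

definition distZ :: "real ^ 'n \<Rightarrow> real" where
  "distZ z = (INF k \<in> {k :: real ^ 'n. \<forall>i. k $ i \<in> \<int>}. Max (range (\<lambda>i. \<bar>z $ i - k $ i\<bar>)))"

definition W :: "(nat \<Rightarrow> real) \<Rightarrow> ((real ^ 'n) \<times> (real ^ 'n)) set" where
  "W \<psi> = {(x, y). infinite {n :: nat. n \<ge> 1 \<and> distZ (real n *\<^sub>R x + y) < \<psi> n}}"

text \<open>The class D (for dimension d = CARD('n)): non-increasing, nonnegative psi on N with
  divergent sum of psi(n)^d. Only the values at n >= 1 matter.\<close>
definition Dcls :: "'n itself \<Rightarrow> (nat \<Rightarrow> real) set" where
  "Dcls _ = {\<psi>. (\<forall>n\<ge>1. 0 \<le> \<psi> n) \<and> (\<forall>m n. 1 \<le> m \<longrightarrow> m \<le> n \<longrightarrow> \<psi> n \<le> \<psi> m)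
              \<and> \<not> summable (\<lambda>n. \<psi> (Suc n) ^ CARD('n))}"

definition Pi_set :: "((real ^ 'n) \<times> (real ^ 'n)) set" where
  "Pi_set = (\<Inter>\<psi> \<in> Dcls TYPE('n). W \<psi>)"

definition Phi :: "real ^ 'n \<Rightarrow> (real ^ 'n) set" where
  "Phi x = {y. (x, y) \<in> Pi_set}"

end

theory Submission
  imports Defs
begin


lemma distZ_less_iff:
  fixes w :: "real ^ 'n"
  shows "distZ w < r \<longleftrightarrow> (\<exists>k. (\<forall>i. k$i \<in> \<int>) \<and> (\<forall>i. \<bar>w$i - k$i\<bar> < r))"
proof -
  let ?L = "{k :: real ^ 'n. \<forall>i. k $ i \<in> \<int>}"
  let ?f = "\<lambda>k. Max (range (\<lambda>i. \<bar>w $ i - k $ i\<bar>))"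
  have "(0::real^'n) \<in> ?L" by simp
  then have ne: "?L \<noteq> {}" by blast
  have nn: "0 \<le> ?f k" for k
    by (rule order.trans[OF abs_ge_zero[of "w $ undefined - k $ undefined"]]) (rule Max_ge, auto)
  have bdd: "bdd_below (?f ` ?L)" by (rule bdd_belowI[of _ 0]) (use nn in auto)
  have mx: "?f k < r \<longleftrightarrow> (\<forall>i. \<bar>w$i - k$i\<bar> < r)" for k
    by (subst Max_less_iff) auto
  show ?thesis unfolding distZ_def
    using cInf_less_iff[of "?f ` ?L" r] ne bdd mx by auto
qed

lemma distZ_nonneg: "0 \<le> distZ (w :: real ^ 'n)"
  unfolding distZ_def
  apply (rule cINF_greatest)
   apply (subgoal_tac "(0::real^'n) \<in> {k. \<forall>i. k $ i \<in> \<int>}", blast, simp)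
  apply (rule order.trans[OF abs_ge_zero[of "w $ undefined - _ $ undefined"]])
  apply (rule Max_ge, auto)
  done

lemma summable_mono_tail:
  fixes f :: "nat \<Rightarrow> real"
  assumes s: "summable f" and nn: "\<And>n. 0 \<le> f n" and mono: "\<And>m n. m \<le> n \<Longrightarrow> f n \<le> f m"
    and t: "t > 0"
  shows "\<exists>K. \<forall>n\<ge>K. real (Suc n) * f n < t"
proof -
  obtain N where N: "\<And>m n. m \<ge> N \<Longrightarrow> norm (\<Sum>k=m..n. f k) < t/2"
    using summable_partial_sum_bound[OF s, of "t/2"] t by auto
  have "real (Suc n) * f n < t" if "n \<ge> 2*N" for n
  proof -
    have "of_nat (card {N..n}) * f n \<le> (\<Sum>k=N..n. f k)"
      by (rule sum_bounded_below) (auto intro: mono)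
    also have "\<dots> < t/2" using N[of N n] sum_nonneg[of "{N..n}" f] nn by auto
    finally have "real (Suc n - N) * f n < t/2" by simp
    moreover have "real (Suc n) \<le> 2 * real (Suc n - N)" using that by auto
    ultimately have "real (Suc n) * f n \<le> 2 * real (Suc n - N) * f n"
      using nn[of n] mult_right_mono by blast
    then show ?thesis using \<open>real (Suc n - N) * f n < t/2\<close> by linarith
  qed
  then show ?thesis by blast
qed



definition cvec :: "real \<Rightarrow> real^'n" where "cvec a = (\<chi> i. a)"

lemma cvec_nth[simp]: "cvec a $ i = a" by (simp add: cvec_def)

lemma cvec_inner_Basis: "b \<in> (Basis :: (real^'n) set) \<Longrightarrow> cvec a \<bullet> b = a"
  by (auto simp: Basis_vec_def inner_axis cvec_def)

lemma box_measure:
  fixes c :: "real^'n"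
  assumes "0 \<le> r"
  shows "emeasure lborel (box (c - cvec r) (c + cvec r)) = ennreal ((2*r)^CARD('n))"
proof -
  have "emeasure lborel (box (c - cvec r) (c + cvec r)) =
      (\<Prod>b\<in>Basis. ((c + cvec r) - (c - cvec r)) \<bullet> b)"
    using assms by (intro emeasure_lborel_box) (auto simp: inner_diff_left inner_add_left cvec_inner_Basis simp del: vector_add_divide_simps)
  also have "\<dots> = (\<Prod>b\<in>(Basis :: (real^'n) set). 2*r)"
  proof -
    have "(c + cvec r) - (c - cvec r) = cvec (2*r)" by (simp add: vec_eq_iff)
    then show ?thesis by (simp add: cvec_inner_Basis)
  qed
  also have "\<dots> = (2*r)^CARD('n)" by simp
  finally show ?thesis by simp
qed

lemma count_bound:
  fixes z :: "real^'n" and M :: nat and r :: real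
  assumes r0: "0 < r" and r1: "r \<le> 1"
  shows "emeasure lborel ({y. distZ (z+y) < r} \<inter> cbox (- cvec (real M)) (cvec (real M)))
     \<le> ennreal (real ((2*M+3)^CARD('n)) * (2*r)^CARD('n))"
proof -
  define J where "J = Pi\<^sub>E (UNIV::'n set) (\<lambda>_. {-(int M+1)..int M+1})"
  define c where "c j = (\<chi> i. real_of_int (\<lfloor>z$i\<rfloor> + j i)) - z" for j :: "'n \<Rightarrow> int"
  define A where "A j = box (c j - cvec r) (c j + cvec r)" for j
  have finJ: "finite J" unfolding J_def by (intro finite_PiE) auto
  have cardJ: "card J = (2*M+3)^CARD('n)"
    unfolding J_def by (subst card_PiE) (auto simp: nat_add_distrib nat_mult_distrib add.commute)
  have sub: "{y. distZ (z+y) < r} \<inter> cbox (- cvec (real M)) (cvec (real M)) \<subseteq> (\<Union>j\<in>J. A j)"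
  proof
    fix y assume "y \<in> {y. distZ (z+y) < r} \<inter> cbox (- cvec (real M)) (cvec (real M))"
    then have d: "distZ (z+y) < r" and yb: "\<And>i. \<bar>y$i\<bar> \<le> real M"
      by (auto simp: mem_box_cart abs_le_iff) (metis minus_le_iff)
    obtain k where kI: "\<And>i. k$i \<in> \<int>" and kc: "\<And>i. \<bar>(z+y)$i - k$i\<bar> < r"
      using d distZ_less_iff by blast
    define j where "j i = \<lfloor>k$i\<rfloor> - \<lfloor>z$i\<rfloor>" for i
    have kf: "real_of_int \<lfloor>k$i\<rfloor> = k$i" for i using kI[of i] by (auto elim: Ints_cases)
    have jb: "-(int M+1) \<le> j i \<and> j i \<le> int M+1" for i
    proof -
      have a: "\<bar>z$i + y$i - k$i\<bar> < 1" using kc[of i] r1 by simp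
      have b1: "real_of_int \<lfloor>z$i\<rfloor> \<le> z$i" "z$i < real_of_int \<lfloor>z$i\<rfloor> + 1" by linarith+
      have "real_of_int (j i) < real M + 2" "real_of_int (j i) > - (real M + 2)"
      proof -
        have e: "real_of_int (j i) = k$i - real_of_int \<lfloor>z$i\<rfloor>" using kf[of i] by (simp add: j_def)
        show "real_of_int (j i) < real M + 2" "real_of_int (j i) > - (real M + 2)"
          using a b1 yb[of i] unfolding e abs_less_iff abs_le_iff by linarith+
      qed
      then have "j i < int M + 2" "j i > - (int M + 2)" by linarith+
      then show ?thesis by linarith
    qed
    have "j \<in> J" unfolding J_def PiE_UNIV_domain using jb by auto
    moreover have "y \<in> A j"
    proof -
      have "c j $ i = k$i - z$i" for i unfolding c_def j_def using kf[of i] by simp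
      then show ?thesis unfolding A_def mem_box_cart
      proof (simp, intro allI)
        fix i show "k $ i - z $ i - r < y $ i \<and> y $ i < k $ i - z $ i + r"
          using kc[of i] by (simp add: abs_less_iff)
      qed
    qed
    ultimately show "y \<in> (\<Union>j\<in>J. A j)" by blast
  qed
  have "emeasure lborel ({y. distZ (z+y) < r} \<inter> cbox (- cvec (real M)) (cvec (real M)))
       \<le> emeasure lborel (\<Union>j\<in>J. A j)"
    by (rule emeasure_mono[OF sub]) (auto simp: A_def)
  also have "\<dots> \<le> (\<Sum>j\<in>J. emeasure lborel (A j))"
    by (rule emeasure_subadditive_finite[OF finJ]) (auto simp: A_def)
  also have "\<dots> = (\<Sum>j\<in>J. ennreal ((2*r)^CARD('n)))"
    unfolding A_def using r0 by (simp add: box_measure)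
  also have "\<dots> = ennreal (real ((2*M+3)^CARD('n)) * (2*r)^CARD('n))"
    using cardJ r0 by (simp add: ennreal_mult' ennreal_of_nat_eq_real_of_nat)
  finally show ?thesis .
qed



lemma open_distZ_less: "open {w :: real^'n. distZ w < r}"
proof -
  have "{w :: real^'n. distZ w < r} = (\<Union>k\<in>{k. \<forall>i. k$i \<in> \<int>}. box (k - cvec r) (k + cvec r))"
    by (auto simp: distZ_less_iff mem_box_cart abs_less_iff) (metis add.commute diff_less_eq less_diff_eq)+
  then show ?thesis by (auto intro!: open_UN)
qed

definition Fx :: "real^'n \<Rightarrow> real \<Rightarrow> nat \<Rightarrow> (real^'n) set" where
  "Fx x t K = {y. \<exists>m\<in>{1..K}. distZ (real m *\<^sub>R x + y) < root CARD('n) (t / real K)}"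

definition Gs :: "real \<Rightarrow> nat \<Rightarrow> ((real^'n) \<times> (real^'n)) set" where
  "Gs t K = {(x,y). \<exists>m\<in>{1..K}. distZ (real m *\<^sub>R x + y) < root CARD('n) (t / real K)}"

definition Nset :: "((real^'n) \<times> (real^'n)) set" where
  "Nset = (\<Inter>j::nat. \<Union>K::nat. \<Inter>n\<in>{K..}. Gs (1 / real (Suc j)) (Suc n))"

lemma open_Fx: fixes x :: "real^'n" shows "open (Fx x t K)"
proof -
  have "Fx x t K = (\<Union>m\<in>{1..K}. (\<lambda>y. real m *\<^sub>R x + y) -` {w. distZ w < root CARD('n) (t / real K)})"
    by (auto simp: Fx_def)
  then show ?thesis
    by (simp only:) (intro open_UN ballI continuous_open_vimage open_distZ_less continuous_intros)
qed

lemma open_Gs: "open (Gs t K :: ((real^'n) \<times> (real^'n)) set)"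
proof -
  have "(Gs t K :: ((real^'n) \<times> (real^'n)) set) = (\<Union>m\<in>{1..K}. (\<lambda>p. real m *\<^sub>R fst p + snd p) -` {w. distZ w < root CARD('n) (t / real K)})"
    by (auto simp: Gs_def)
  then show ?thesis
    by (simp only:) (intro open_UN ballI continuous_open_vimage open_distZ_less continuous_intros)
qed

lemma Nset_borel: "(Nset :: ((real^'n) \<times> (real^'n)) set) \<in> sets borel"
  unfolding Nset_def
  by (intro sets.countable_INT'' sets.countable_UN'' borel_open open_Gs) auto

lemma Nset_fiber: fixes x :: "real^'n" shows "Pair x -` Nset = (\<Inter>j::nat. \<Union>K::nat. \<Inter>n\<in>{K..}. Fx x (1 / real (Suc j)) (Suc n))"
  by (auto simp: Nset_def Gs_def Fx_def)



lemma Pi_subset_Nset: "(Pi_set :: ((real^'n) \<times> (real^'n)) set) \<subseteq> Nset"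
proof
  fix p :: "(real^'n) \<times> (real^'n)"
  assume pP: "p \<in> Pi_set"
  obtain x y where p: "p = (x,y)" by (cases p)
  define a where "a m = distZ (real m *\<^sub>R x + y)" for m
  define \<psi> where "\<psi> n = Min (a ` {1..max 1 n})" for n
  have a0: "0 \<le> a m" for m unfolding a_def by (rule distZ_nonneg)
  have \<psi>in: "\<psi> n \<in> a ` {1..max 1 n}" for n unfolding \<psi>_def by (intro Min_in) auto
  have \<psi>0: "0 \<le> \<psi> n" for n using \<psi>in[of n] a0 by auto
  have \<psi>le: "\<psi> n \<le> a n" if "n \<ge> 1" for n unfolding \<psi>_def using that by (intro Min_le) auto
  have \<psi>mono: "\<psi> n \<le> \<psi> m" if "m \<le> n" for m n
    unfolding \<psi>_def using that by (intro Min_antimono) auto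
  have notW: "(x,y) \<notin> W \<psi>"
  proof -
    have "{n :: nat. n \<ge> 1 \<and> distZ (real n *\<^sub>R x + y) < \<psi> n} = {}"
      using \<psi>le unfolding a_def by force
    then show ?thesis unfolding W_def by (simp only: mem_Collect_eq prod.case) simp
  qed
  have "\<psi> \<notin> Dcls TYPE('n)"
    using pP notW unfolding p Pi_set_def by blast
  then have summ: "summable (\<lambda>n. \<psi> (Suc n) ^ CARD('n))"
    unfolding Dcls_def using \<psi>0 \<psi>mono by auto
  show "p \<in> Nset" unfolding Nset_def p
  proof (intro InterI, clarsimp)
    fix j :: nat
    define t where "t = 1 / real (Suc j)"
    have t0: "t > 0" unfolding t_def by simp
    obtain K where K: "\<And>n. n \<ge> K \<Longrightarrow> real (Suc n) * \<psi> (Suc n) ^ CARD('n) < t"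
      using summable_mono_tail[OF summ _ _ t0] \<psi>0 \<psi>mono
      by (metis Suc_le_mono power_mono zero_le_power)
    have "(x,y) \<in> Gs t (Suc n)" if "n \<ge> K" for n
    proof -
      have "\<psi> (Suc n) ^ CARD('n) < t / real (Suc n)"
        using K[OF that] by (simp add: field_simps)
      also have "\<dots> = root CARD('n) (t / real (Suc n)) ^ CARD('n)"
        using t0 by simp
      finally have lt: "\<psi> (Suc n) < root CARD('n) (t / real (Suc n))"
        by (rule power_less_imp_less_base) (use t0 in simp)
      obtain m where "m \<in> {1..Suc n}" "\<psi> (Suc n) = a m" using \<psi>in[of "Suc n"] by auto
      then show ?thesis unfolding Gs_def a_def using lt by auto
    qed
    then show "\<exists>K. \<forall>n\<in>{K..}. (x, y) \<in> Gs (1 / (1 + real j)) (Suc n)"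
      unfolding t_def by auto
  qed
qed



lemma Fx_bound:
  fixes x :: "real^'n"
  assumes t0: "0 < t" and t1: "t \<le> 1" and K1: "K \<ge> 1"
  shows "emeasure lborel (Fx x t K \<inter> cbox (- cvec (real M)) (cvec (real M)))
     \<le> ennreal (real ((2*M+3)^CARD('n)) * 2^CARD('n) * t)"
proof -
  define r where "r = root CARD('n) (t / real K)"
  define C where "C = real ((2*M+3)^CARD('n))"
  define Cb where "Cb = cbox (- cvec (real M)) (cvec (real M) :: real^'n)"
  have tk0: "0 < t / real K" using t0 K1 by simp
  have tk1: "t / real K \<le> 1" using t1 K1 by (simp add: divide_le_eq_1)
  have r0: "0 < r" unfolding r_def using tk0 by simp
  have r1: "r \<le> 1" unfolding r_def using tk1 tk0
    by (metis real_root_le_mono real_root_one zero_less_card_finite)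
  have rp: "r ^ CARD('n) = t / real K" unfolding r_def using tk0 by simp
  have eq: "Fx x t K \<inter> Cb = (\<Union>m\<in>{1..K}. {y. distZ (real m *\<^sub>R x + y) < r} \<inter> Cb)"
    unfolding Fx_def r_def by auto
  have meas: "{y. distZ (real m *\<^sub>R x + y) < r} \<inter> Cb \<in> sets lborel" for m
  proof -
    have "open ((\<lambda>y. real m *\<^sub>R x + y) -` {w. distZ w < r})"
      by (intro continuous_open_vimage open_distZ_less continuous_intros)
    then have "{y. distZ (real m *\<^sub>R x + y) < r} \<in> sets borel" by (simp add: borel_open vimage_def)
    then show ?thesis unfolding Cb_def by simp
  qed
  have "emeasure lborel (Fx x t K \<inter> Cb) \<le> (\<Sum>m\<in>{1..K}. emeasure lborel ({y. distZ (real m *\<^sub>R x + y) < r} \<inter> Cb))"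
    unfolding eq by (rule emeasure_subadditive_finite) (use meas in auto)
  also have "\<dots> \<le> (\<Sum>m\<in>{1..K}. ennreal (C * (2*r)^CARD('n)))"
    by (intro sum_mono) (unfold C_def Cb_def, rule count_bound[OF r0 r1])
  also have "\<dots> = ennreal (real K * (C * (2*r)^CARD('n)))"
    by (simp add: ennreal_of_nat_eq_real_of_nat ennreal_mult' C_def r0)
  also have "real K * (C * (2*r)^CARD('n)) = C * 2^CARD('n) * t"
    using K1 by (simp add: power_mult_distrib rp)
  finally show ?thesis unfolding C_def Cb_def .
qed



lemma fiber_borel: fixes x :: "real^'n" shows "Pair x -` Nset \<in> sets borel"
  unfolding Nset_fiber
  by (intro sets.countable_INT'' sets.countable_UN'' borel_open open_Fx) auto

lemma fiber_box_zero:
  fixes x :: "real^'n"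
  shows "emeasure lborel (Pair x -` Nset \<inter> cbox (- cvec (real M)) (cvec (real M))) = 0"
proof -
  define Cb where "Cb = cbox (- cvec (real M)) (cvec (real M) :: real^'n)"
  define C where "C = real ((2*M+3)^CARD('n)) * 2^CARD('n)"
  have C0: "0 \<le> C" unfolding C_def by simp
  have bnd: "emeasure lborel (Pair x -` Nset \<inter> Cb) \<le> ennreal (C / real (Suc j))" for j
  proof -
    define t where "t = 1 / real (Suc j)"
    have t0: "0 < t" and t1: "t \<le> 1" unfolding t_def by (auto simp: divide_le_eq_1)
    define S where "S K = (\<Inter>n\<in>{K..}. Fx x t (Suc n)) \<inter> Cb" for K
    have Sm: "S K \<in> sets lborel" for K unfolding S_def Cb_def
      by (simp, rule sets.Int[OF _ borel_closed[OF closed_cbox]], intro sets.countable_INT'' borel_open open_Fx) auto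
    have inc: "incseq S" unfolding S_def incseq_def by auto
    have "Pair x -` Nset \<inter> Cb \<subseteq> (\<Union>K. S K)"
      unfolding Nset_fiber S_def t_def by blast
    then have "emeasure lborel (Pair x -` Nset \<inter> Cb) \<le> emeasure lborel (\<Union>K. S K)"
      by (rule emeasure_mono) (use Sm in auto)
    also have "\<dots> = (SUP K. emeasure lborel (S K))"
    proof -
      have "range S \<subseteq> sets lborel" using Sm by auto
      from SUP_emeasure_incseq[OF this inc] show ?thesis by simp
    qed
    also have "\<dots> \<le> ennreal (C * t)"
    proof (rule SUP_least)
      fix K
      have "emeasure lborel (S K) \<le> emeasure lborel (Fx x t (Suc K) \<inter> Cb)"
        by (rule emeasure_mono) (auto simp: S_def Cb_def intro!: sets.Int[OF borel_open[OF open_Fx] borel_closed[OF closed_cbox]])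
      also have "\<dots> \<le> ennreal (C * t)"
        unfolding C_def Cb_def using Fx_bound[OF t0 t1, of "Suc K" x M] by simp
      finally show "emeasure lborel (S K) \<le> ennreal (C * t)" .
    qed
    finally show ?thesis unfolding t_def by simp
  qed
  have lim: "(\<lambda>j. ennreal (C / real (Suc j))) \<longlonglongrightarrow> ennreal 0"
    by (intro tendsto_ennrealI LIMSEQ_Suc[OF lim_const_over_n])
  have "emeasure lborel (Pair x -` Nset \<inter> Cb) \<le> ennreal 0"
    by (rule LIMSEQ_le_const[OF lim]) (use bnd in auto)
  then show ?thesis unfolding Cb_def by simp
qed

lemma fiber_null: fixes x :: "real^'n" shows "Pair x -` Nset \<in> null_sets lborel"
proof -
  have cov: "Pair x -` Nset = (\<Union>M. Pair x -` Nset \<inter> cbox (- cvec (real M)) (cvec (real M)))"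
  proof (rule set_eqI, rule iffI)
    fix y :: "real^'n" assume y: "y \<in> Pair x -` Nset"
    obtain M :: nat where M: "Max (range (\<lambda>i. \<bar>y$i\<bar>)) \<le> real M" using real_arch_simple by blast
    have "\<bar>y$i\<bar> \<le> real M" for i by (rule order.trans[OF _ M]) (rule Max_ge, auto)
    then have "y \<in> cbox (- cvec (real M)) (cvec (real M))"
      by (auto simp: mem_box_cart abs_le_iff) (metis minus_le_iff)
    then show "y \<in> (\<Union>M. Pair x -` Nset \<inter> cbox (- cvec (real M)) (cvec (real M)))" using y by blast
  qed blast
  have "(\<Union>M. Pair x -` Nset \<inter> cbox (- cvec (real M)) (cvec (real M) :: real^'n)) \<in> null_sets lborel"
  proof (rule null_sets_UN, rule null_setsI)
    fix M show "emeasure lborel (Pair x -` Nset \<inter> cbox (- cvec (real M)) (cvec (real M))) = 0"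
      by (rule fiber_box_zero)
    show "Pair x -` Nset \<inter> cbox (- cvec (real M)) (cvec (real M)) \<in> sets lborel"
      using fiber_borel[of x] by simp
  qed
  then show ?thesis using cov by simp
qed

lemma Nset_null: "(Nset :: ((real^'n) \<times> (real^'n)) set) \<in> null_sets lborel"
proof -
  have sN: "(Nset :: ((real^'n) \<times> (real^'n)) set) \<in> sets (lborel \<Otimes>\<^sub>M lborel)"
    using Nset_borel by (subst lborel_prod) simp
  have "emeasure (lborel \<Otimes>\<^sub>M lborel) (Nset :: ((real^'n) \<times> (real^'n)) set)
      = (\<integral>\<^sup>+x. 0 \<partial>(lborel :: (real^'n) measure))"
    unfolding lborel.emeasure_pair_measure_alt[OF sN]
    by (intro nn_integral_cong) (use fiber_null in auto)
  then have "emeasure lborel (Nset :: ((real^'n) \<times> (real^'n)) set) = 0"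
    by (simp add: lborel_prod)
  then show ?thesis using Nset_borel by (intro null_setsI) auto
qed

theorem theorem2:
  shows "(Pi_set :: ((real ^ 'n) \<times> (real ^ 'n)) set) \<in> sets lebesgue
         \<and> emeasure lebesgue (Pi_set :: ((real ^ 'n) \<times> (real ^ 'n)) set) = 0
         \<and> (\<forall>x :: real ^ 'n. Phi x \<in> null_sets lebesgue)"
proof -
  have N: "(Pi_set :: ((real ^ 'n) \<times> (real ^ 'n)) set) \<in> null_sets lebesgue"
    by (rule null_sets_completion_subset[OF Pi_subset_Nset null_sets_completionI[OF Nset_null]])
  have "Phi x \<in> null_sets lebesgue" for x :: "real^'n"
  proof -
    have "Phi x \<subseteq> Pair x -` Nset" using Pi_subset_Nset unfolding Phi_def by auto
    then show ?thesis by (rule null_sets_completion_subset[OF _ null_sets_completionI[OF fiber_null]])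
  qed
  then show ?thesis using N by auto
qed


end
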